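(* Let $G=(V,E_1,\dots,E_k)$ be a complete $k$-edge-colored graph. Assume that for every $i\in\{1,\dots,k\}$ the monochromatic subgraph $G_{|i}$, together with some labeling $\ell_i$, is a simple permutation graph, and that the quotient graph $G[M]/\mathbb{P}_{\max}(M)$ of each strong prime module $M$ of $G$ with $|M|\ge 3$ is $2$-edge-colored. Then $G$ is a complete edge-colored permutation graph.
   Context: A complete $k$-edge-colored graph $G=(V,E_1,\dots,E_k)$ is the complete graph on a finite set $V$ with edges partitioned into $k$ nonempty color classes $E_i$ (the one-vertex graph also counts); $G_{|i}=(V,E_i)$. A labeling is a bijection $\ell:V\to\{1,\dots,|V|\}$. A graph $(V,E)$ with labeling $\ell$ is a simple permutation graph of a permutation $\pi$ if for all $u,v$ with $\ell(u)>\ell(v)$: $\{u,v\}\in E$ iff $\pi^{-1}(\ell(u))<\pi^{-1}(\ell(v))$. $G$ is a complete edge-colored permutation graph if there exist a single labeling $\ell$ and permutations $\pi_1,\dots,\pi_k$ with $(G_{|i},\ell)$ a simple permutation graph of $\pi_i$ for all $i$. A module is a set $M\subseteq V$ such that for every $v\notin M$ all edges $\{u,v\}$, $u\in M$, have the same color; a strong module is a nonempty module comparable by inclusion or disjoint with every other module. For a strong module $M$ with $|M|\ge2$, $\mathbb{P}_{\max}(M)$ is the set of inclusion-maximal strong modules properly contained in $M$, and $G[M]/\mathbb{P}_{\max}(M)$ is the complete graph on $\mathbb{P}_{\max}(M)$ with $\{M_a,M_b\}$ colored by the common color of all edges between $M_a$ and $M_b$; for $|M|=1$ it is the one-vertex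 graph. A strong module is series if its quotient graph has at least two vertices and all its edges have one color, and prime otherwise. *)

theory Defs
  imports Main
begin

text \<open>A complete k-edge-colored graph on vertex set V is given by a symmetric
  colouring function col: the edge {u,v} (u \<noteq> v) lies in colour class E_(col u v).
  Values of col on pairs outside V or on loops are irrelevant.\<close>

definition complete_k_edge_colored :: "'a set \<Rightarrow> nat \<Rightarrow> ('a \<Rightarrow> 'a \<Rightarrow> nat) \<Rightarrow> bool" where
  "complete_k_edge_colored V k col \<longleftrightarrow>
     finite V \<and> V \<noteq> {} \<and>
     (\<forall>u\<in>V. \<forall>v\<in>V. u \<noteq> v \<longrightarrow> col u v = col v u \<and> col u v \<in> {1..k}) \<and>
     (\<forall>i\<in>{1..k}. \<exists>u\<in>V. \<exists>v\<in>V. u \<noteq> v \<and> col u v = i)"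

definition is_labeling :: "'a set \<Rightarrow> ('a \<Rightarrow> nat) \<Rightarrow> bool" where
  "is_labeling V l \<longleftrightarrow> bij_betw l V {1..card V}"

definition simple_perm_graph ::
  "'a set \<Rightarrow> ('a \<Rightarrow> 'a \<Rightarrow> bool) \<Rightarrow> ('a \<Rightarrow> nat) \<Rightarrow> (nat \<Rightarrow> nat) \<Rightarrow> bool" where
  "simple_perm_graph V E l \<pi> \<longleftrightarrow>
     is_labeling V l \<and> bij_betw \<pi> {1..card V} {1..card V} \<and>
     (\<forall>u\<in>V. \<forall>v\<in>V. l u > l v \<longrightarrow>
        (E u v \<longleftrightarrow> inv_into {1..card V} \<pi> (l u) < inv_into {1..card V} \<pi> (l v)))"

definition color_edges :: "('a \<Rightarrow> 'a \<Rightarrow> nat) \<Rightarrow> nat \<Rightarrow> 'a \<Rightarrow> 'a \<Rightarrow> bool" where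
  "color_edges col i u v \<longleftrightarrow> u \<noteq> v \<and> col u v = i"

definition complete_edge_colored_perm_graph :: "'a set \<Rightarrow> nat \<Rightarrow> ('a \<Rightarrow> 'a \<Rightarrow> nat) \<Rightarrow> bool" where
  "complete_edge_colored_perm_graph V k col \<longleftrightarrow>
     (\<exists>l \<pi>. \<forall>i\<in>{1..k}. simple_perm_graph V (color_edges col i) l (\<pi> i))"

definition is_module :: "'a set \<Rightarrow> ('a \<Rightarrow> 'a \<Rightarrow> nat) \<Rightarrow> 'a set \<Rightarrow> bool" where
  "is_module V col M \<longleftrightarrow> M \<subseteq> V \<and>
     (\<forall>v\<in>V - M. \<forall>u\<in>M. \<forall>u'\<in>M. col u v = col u' v)"

definition strong_module :: "'a set \<Rightarrow> ('a \<Rightarrow> 'a \<Rightarrow> nat) \<Rightarrow> 'a set \<Rightarrow> bool" where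
  "strong_module V col M \<longleftrightarrow> is_module V col M \<and> M \<noteq> {} \<and>
     (\<forall>M'. is_module V col M' \<longrightarrow> M \<subseteq> M' \<or> M' \<subseteq> M \<or> M \<inter> M' = {})"

definition Pmax :: "'a set \<Rightarrow> ('a \<Rightarrow> 'a \<Rightarrow> nat) \<Rightarrow> 'a set \<Rightarrow> 'a set set" where
  "Pmax V col M = {M'. strong_module V col M' \<and> M' \<subset> M \<and>
     (\<forall>M''. strong_module V col M'' \<and> M'' \<subset> M \<longrightarrow> \<not> M' \<subset> M'')}"

text \<open>Colour of the edge {Ma,Mb} in the quotient graph: the common colour of the
  edges between Ma and Mb (represented by one pair of representatives).\<close>
definition quotient_color :: "('a \<Rightarrow> 'a \<Rightarrow> nat) \<Rightarrow> 'a set \<Rightarrow> 'a set \<Rightarrow> nat" where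
  "quotient_color col Ma Mb = col (SOME x. x \<in> Ma) (SOME y. y \<in> Mb)"

definition quotient_colors :: "'a set \<Rightarrow> ('a \<Rightarrow> 'a \<Rightarrow> nat) \<Rightarrow> 'a set \<Rightarrow> nat set" where
  "quotient_colors V col M = {c. \<exists>Ma\<in>Pmax V col M. \<exists>Mb\<in>Pmax V col M.
      Ma \<noteq> Mb \<and> c = quotient_color col Ma Mb}"

definition series_module :: "'a set \<Rightarrow> ('a \<Rightarrow> 'a \<Rightarrow> nat) \<Rightarrow> 'a set \<Rightarrow> bool" where
  "series_module V col M \<longleftrightarrow> strong_module V col M \<and> card M \<ge> 2 \<and>
     card (Pmax V col M) \<ge> 2 \<and> card (quotient_colors V col M) = 1"

definition prime_module :: "'a set \<Rightarrow> ('a \<Rightarrow> 'a \<Rightarrow> nat) \<Rightarrow> 'a set \<Rightarrow> bool" where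
  "prime_module V col M \<longleftrightarrow> strong_module V col M \<and> \<not> series_module V col M"

end

theory Submission
  imports Defs
begin


definition rank :: "('a \<Rightarrow> nat) \<Rightarrow> 'a set \<Rightarrow> 'a \<Rightarrow> nat" where
  "rank f S u = card {w\<in>S. f w < f u}"

lemma rank_mono:
  assumes "finite S" "inj_on f S" "u \<in> S" "v \<in> S"
  shows "f u < f v \<longleftrightarrow> rank f S u < rank f S v"
proof
  assume "f u < f v"
  then have "{w\<in>S. f w < f u} \<subset> {w\<in>S. f w < f v}" using assms by auto
  then show "rank f S u < rank f S v" unfolding rank_def
    by (rule psubset_card_mono[rotated]) (use assms in auto)
next
  assume r: "rank f S u < rank f S v"
  show "f u < f v"
  proof (rule ccontr)
    assume "\<not> f u < f v"
    then consider "f u = f v" | "f v < f u" by linarith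
    then show False
    proof cases
      case 1 then have "u = v" using assms inj_onD by metis
      then show False using r by simp
    next
      case 2
      then have "{w\<in>S. f w < f v} \<subset> {w\<in>S. f w < f u}" using assms by auto
      then have "rank f S v < rank f S u" unfolding rank_def
        by (rule psubset_card_mono[rotated]) (use assms in auto)
      then show False using r by simp
    qed
  qed
qed

lemma rank_lt:
  assumes "finite S" "u \<in> S" shows "rank f S u < card S"
proof -
  have "{w\<in>S. f w < f u} \<subset> S" using assms by auto
  then show ?thesis unfolding rank_def using assms psubset_card_mono by blast
qed

lemma rank_inj:
  assumes "finite S" "inj_on f S" shows "inj_on (rank f S) S"
proof (rule inj_onI)
  fix u v assume "u \<in> S" "v \<in> S" "rank f S u = rank f S v"
  then have "\<not> f u < f v" "\<not> f v < f u" using rank_mono[OF assms] by (metis less_irrefl)+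
  then have "f u = f v" by linarith
  then show "u = v" using assms \<open>u \<in> S\<close> \<open>v \<in> S\<close> inj_onD by metis
qed

lemma bij_card:
  assumes "finite S" "inj_on f S" "f ` S \<subseteq> T" "finite T" "card T = card S"
  shows "bij_betw f S T"
  unfolding bij_betw_def using assms card_image card_subset_eq by metis

lemma lex_less:
  fixes a b x y n :: nat
  assumes "x < n" "y < n"
  shows "a*n + x < b*n + y \<longleftrightarrow> a < b \<or> (a = b \<and> x < y)"
proof -
  have *: "a*n + x < b*n + y" if "a < b" "x < n" for a b x y :: nat
  proof -
    have "a*n + x < a*n + n" using that by simp
    also have "\<dots> = Suc a * n" by simp
    also have "\<dots> \<le> b * n" using that by (intro mult_le_mono1) simp
    finally show ?thesis by simp
  qed
  show ?thesis
  proof (cases a b rule: linorder_cases)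
    case less then show ?thesis using *[OF less assms(1)] by simp
  next
    case equal then show ?thesis by simp
  next
    case greater
    have "b*n + y < a*n + x" using *[OF greater assms(2)] by simp
    then show ?thesis using greater by simp
  qed
qed


definition realizes :: "('a \<Rightarrow> 'a \<Rightarrow> nat) \<Rightarrow> 'a set \<Rightarrow> ('a \<Rightarrow> nat) \<Rightarrow> (nat \<Rightarrow> 'a \<Rightarrow> nat) \<Rightarrow> bool" where
  "realizes col S L P \<longleftrightarrow> inj_on L S \<and> (\<forall>i. inj_on (P i) S) \<and>
     (\<forall>i. \<forall>u\<in>S. \<forall>v\<in>S. L v < L u \<longrightarrow> (col u v = i \<longleftrightarrow> P i u < P i v))"

lemma realizes_rank:
  assumes fin: "finite S" and r: "realizes col S L P"
  shows "realizes col S (rank L S) (\<lambda>i. rank (P i) S)"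
proof -
  have m: "\<And>f u v. inj_on f S \<Longrightarrow> u \<in> S \<Longrightarrow> v \<in> S \<Longrightarrow> f u < f v \<longleftrightarrow> rank f S u < rank f S v"
    using rank_mono[OF fin] by blast
  have iL: "inj_on L S" and iP: "\<And>i. inj_on (P i) S"
    and h: "\<And>i u v. u \<in> S \<Longrightarrow> v \<in> S \<Longrightarrow> L v < L u \<Longrightarrow> (col u v = i \<longleftrightarrow> P i u < P i v)"
    using r unfolding realizes_def by blast+
  have "col u v = i \<longleftrightarrow> rank (P i) S u < rank (P i) S v"
    if "u \<in> S" "v \<in> S" "rank L S v < rank L S u" for i u v
  proof -
    have "L v < L u" using m[OF iL, of v u] that by blast
    then have "col u v = i \<longleftrightarrow> P i u < P i v" using h that by blast
    also have "\<dots> \<longleftrightarrow> rank (P i) S u < rank (P i) S v" using m[OF iP, of u v] that by blast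
    finally show ?thesis .
  qed
  then show ?thesis unfolding realizes_def using rank_inj[OF fin] iL iP by blast
qed

lemma compose:
  fixes qc :: "'a set \<Rightarrow> 'a set \<Rightarrow> nat"
  assumes fin: "finite S"
    and part: "\<forall>A\<in>C. A \<subseteq> S" "\<Union>C = S" "\<forall>A\<in>C. \<forall>B\<in>C. A \<noteq> B \<longrightarrow> A \<inter> B = {}"
    and cross: "\<forall>A\<in>C. \<forall>B\<in>C. A \<noteq> B \<longrightarrow> (\<forall>x\<in>A. \<forall>y\<in>B. col x y = qc A B)"
    and q: "realizes qc C Lq Pq"
    and ch: "\<forall>A\<in>C. realizes col A (LL A) (PP A) \<and>
               (\<forall>u\<in>A. LL A u < card S \<and> (\<forall>i. PP A i u < card S))"
  shows "\<exists>L P. realizes col S L P"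
proof -
  have injLq: "inj_on Lq C" and injPq: "\<And>i. inj_on (Pq i) C"
    and qr: "\<And>i A B. A \<in> C \<Longrightarrow> B \<in> C \<Longrightarrow> Lq B < Lq A \<Longrightarrow> (qc A B = i \<longleftrightarrow> Pq i A < Pq i B)"
    using q unfolding realizes_def by blast+
  have injLL: "\<And>A. A \<in> C \<Longrightarrow> inj_on (LL A) A" and injPP: "\<And>A i. A \<in> C \<Longrightarrow> inj_on (PP A i) A"
    and chr: "\<And>i A u v. A \<in> C \<Longrightarrow> u \<in> A \<Longrightarrow> v \<in> A \<Longrightarrow> LL A v < LL A u \<Longrightarrow> (col u v = i \<longleftrightarrow> PP A i u < PP A i v)"
    and bd: "\<And>A u. A \<in> C \<Longrightarrow> u \<in> A \<Longrightarrow> LL A u < card S"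
    and bd2: "\<And>A u i. A \<in> C \<Longrightarrow> u \<in> A \<Longrightarrow> PP A i u < card S"
    using ch unfolding realizes_def by blast+
  define n where "n = card S"
  define c where "c u = (THE A. A \<in> C \<and> u \<in> A)" for u
  have c: "c u \<in> C \<and> u \<in> c u" if us: "u \<in> S" for u
  proof -
    obtain A where A: "A \<in> C" "u \<in> A" using us part(2) by blast
    have "c u = A" unfolding c_def
      by (rule the_equality) (use A part(3) in blast)+
    then show ?thesis using A by simp
  qed
  have cu: "c u = A" if "A \<in> C" "u \<in> A" for u A
    unfolding c_def by (rule the_equality) (use that part(3) in blast)+
  define L where "L u = Lq (c u) * n + LL (c u) u" for u
  define P where "P i u = Pq i (c u) * n + PP (c u) i u" for i u
  have Lless: "L v < L u \<longleftrightarrow> Lq (c v) < Lq (c u) \<or> (c v = c u \<and> LL (c u) v < LL (c u) u)"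
    if "u \<in> S" "v \<in> S" for u v
  proof -
    have "L v < L u \<longleftrightarrow> Lq (c v) < Lq (c u) \<or> (Lq (c v) = Lq (c u) \<and> LL (c v) v < LL (c u) u)"
    proof -
      have "LL (c v) v < n" "LL (c u) u < n" using bd c that unfolding n_def by blast+
      then show ?thesis unfolding L_def by (rule lex_less)
    qed
    moreover have "Lq (c v) = Lq (c u) \<longleftrightarrow> c v = c u"
      using c[OF that(1)] c[OF that(2)] inj_on_eq_iff[OF injLq] by blast
    ultimately show ?thesis by (cases "c v = c u") auto
  qed
  have Pless: "P i u < P i v \<longleftrightarrow> Pq i (c u) < Pq i (c v) \<or> (c v = c u \<and> PP (c u) i u < PP (c u) i v)"
    if "u \<in> S" "v \<in> S" for u v i
  proof -
    have "P i u < P i v \<longleftrightarrow> Pq i (c u) < Pq i (c v) \<or> (Pq i (c u) = Pq i (c v) \<and> PP (c u) i u < PP (c v) i v)"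
    proof -
      have "PP (c u) i u < n" "PP (c v) i v < n" using bd2 c that unfolding n_def by blast+
      then show ?thesis unfolding P_def by (rule lex_less)
    qed
    moreover have "Pq i (c v) = Pq i (c u) \<longleftrightarrow> c v = c u"
      using c[OF that(1)] c[OF that(2)] inj_on_eq_iff[OF injPq] by blast
    ultimately show ?thesis by (cases "c v = c u") auto
  qed
  have injL: "inj_on L S"
  proof (rule inj_onI)
    fix u v assume uv: "u \<in> S" "v \<in> S" "L u = L v"
    then have "\<not> L v < L u" "\<not> L u < L v" by auto
    then have "\<not> Lq (c v) < Lq (c u)" "\<not> Lq (c u) < Lq (c v)"
      and e: "c v = c u \<Longrightarrow> \<not> LL (c u) v < LL (c u) u \<and> \<not> LL (c u) u < LL (c u) v"
      using Lless[OF uv(1,2)] Lless[OF uv(2,1)] by auto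
    then have "Lq (c u) = Lq (c v)" by linarith
    then have "c u = c v" using c[OF uv(1)] c[OF uv(2)] inj_on_eq_iff[OF injLq] by blast
    then have "LL (c u) u = LL (c u) v" using e by fastforce
    then show "u = v" using c[OF uv(1)] c[OF uv(2)] \<open>c u = c v\<close> inj_on_eq_iff[OF injLL] by metis
  qed
  have injP: "inj_on (P i) S" for i
  proof (rule inj_onI)
    fix u v assume uv: "u \<in> S" "v \<in> S" "P i u = P i v"
    then have "\<not> P i v < P i u" "\<not> P i u < P i v" by auto
    then have "\<not> Pq i (c v) < Pq i (c u)" "\<not> Pq i (c u) < Pq i (c v)"
      and e: "c v = c u \<Longrightarrow> \<not> PP (c u) i v < PP (c u) i u \<and> \<not> PP (c u) i u < PP (c u) i v"
      using Pless[OF uv(1,2)] Pless[OF uv(2,1)] by auto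
    then have "Pq i (c u) = Pq i (c v)" by linarith
    then have "c u = c v" using c[OF uv(1)] c[OF uv(2)] inj_on_eq_iff[OF injPq] by blast
    then have "PP (c u) i u = PP (c u) i v" using e by fastforce
    then show "u = v" using c[OF uv(1)] c[OF uv(2)] \<open>c u = c v\<close> inj_on_eq_iff[OF injPP] by metis
  qed
  have main: "col u v = i \<longleftrightarrow> P i u < P i v" if uv: "u \<in> S" "v \<in> S" "L v < L u" for i u v
  proof (cases "c v = c u")
    case True
    then have "LL (c u) v < LL (c u) u" using Lless[OF uv(1,2)] uv(3) by auto
    then have "col u v = i \<longleftrightarrow> PP (c u) i u < PP (c u) i v"
      using chr[of "c u" u v i] c[OF uv(1)] c[OF uv(2)] True by simp
    then show ?thesis using Pless[OF uv(1,2)] True by auto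
  next
    case False
    then have lt: "Lq (c v) < Lq (c u)" using Lless[OF uv(1,2)] uv(3) by auto
    have "col u v = qc (c u) (c v)" using cross c[OF uv(1)] c[OF uv(2)] False by blast
    also have "\<dots> = i \<longleftrightarrow> Pq i (c u) < Pq i (c v)" using qr lt c uv by blast
    finally show ?thesis using Pless[OF uv(1,2)] False by auto
  qed
  show ?thesis unfolding realizes_def using injL injP main by blast
qed



locale cg =
  fixes V :: "'a set" and k :: nat and col :: "'a \<Rightarrow> 'a \<Rightarrow> nat"
  assumes fin: "finite V"
    and sym: "\<forall>u\<in>V. \<forall>v\<in>V. u \<noteq> v \<longrightarrow> col u v = col v u"
    and rng: "\<forall>u\<in>V. \<forall>v\<in>V. u \<noteq> v \<longrightarrow> col u v \<in> {1..k}"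
    and h2: "\<forall>i\<in>{1..k}. \<exists>l \<pi>. simple_perm_graph V (color_edges col i) l \<pi>"
    and h3: "\<forall>M. strong_module V col M \<and> prime_module V col M \<and> card M \<ge> 3
               \<longrightarrow> card (quotient_colors V col M) = 2"
begin

lemma symI: "u \<in> V \<Longrightarrow> v \<in> V \<Longrightarrow> u \<noteq> v \<Longrightarrow> col u v = col v u"
  using sym by blast

lemma strong_sub: "strong_module V col S \<Longrightarrow> S \<subseteq> V \<and> S \<noteq> {}"
  unfolding strong_module_def is_module_def by blast

lemma singleton_strong: "x \<in> V \<Longrightarrow> strong_module V col {x}"
  unfolding strong_module_def is_module_def by auto

lemma V_strong: "V \<noteq> {} \<Longrightarrow> strong_module V col V"
  unfolding strong_module_def is_module_def by auto

lemma cross: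
  assumes "is_module V col A" "is_module V col B" "A \<inter> B = {}"
    "x \<in> A" "x' \<in> A" "y \<in> B" "y' \<in> B"
  shows "col x y = col x' y'"
proof -
  have AB: "A \<subseteq> V" "B \<subseteq> V" and mA: "\<forall>v\<in>V - A. \<forall>u\<in>A. \<forall>u'\<in>A. col u v = col u' v"
    and mB: "\<forall>v\<in>V - B. \<forall>u\<in>B. \<forall>u'\<in>B. col u v = col u' v"
    using assms(1,2) unfolding is_module_def by blast+
  have yA: "y \<in> V - A" and xB: "x' \<in> V - B" using assms(3-7) AB by blast+
  have ne: "x' \<noteq> y" "y' \<noteq> x'" using assms(3-7) by blast+
  have "col x y = col x' y" using mA yA assms(4,5) by blast
  also have "\<dots> = col y x'" using symI[of x' y] AB assms(5,6) ne by blast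
  also have "\<dots> = col y' x'" using mB xB assms(6,7) by blast
  also have "\<dots> = col x' y'" using symI[of y' x'] AB assms(5,7) ne by blast
  finally show ?thesis .
qed

lemma Pmax_strong: "A \<in> Pmax V col S \<Longrightarrow> strong_module V col A \<and> A \<subset> S"
  unfolding Pmax_def by blast

lemma Pmax_disj:
  assumes "A \<in> Pmax V col S" "B \<in> Pmax V col S" "A \<noteq> B"
  shows "A \<inter> B = {}"
proof -
  have "strong_module V col A" "strong_module V col B" "A \<subset> S" "B \<subset> S"
    using assms Pmax_strong by blast+
  then have "A \<subseteq> B \<or> B \<subseteq> A \<or> A \<inter> B = {}"
    unfolding strong_module_def by blast
  moreover have "\<not> A \<subset> B" using assms \<open>strong_module V col B\<close> \<open>B \<subset> S\<close> unfolding Pmax_def by blast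
  moreover have "\<not> B \<subset> A" using assms \<open>strong_module V col A\<close> \<open>A \<subset> S\<close> unfolding Pmax_def by blast
  ultimately show ?thesis using assms(3) by blast
qed

lemma Pmax_cover:
  assumes "strong_module V col S" "2 \<le> card S" "x \<in> S"
  shows "\<exists>A\<in>Pmax V col S. x \<in> A"
proof -
  define F where "F = {T. strong_module V col T \<and> T \<subset> S \<and> x \<in> T}"
  have SV: "S \<subseteq> V" using assms strong_sub by blast
  have fS: "finite S" using SV fin finite_subset by blast
  have "{x} \<subset> S"
  proof -
    have "S \<noteq> {x}" using assms(2) by auto
    then show ?thesis using assms(3) by blast
  qed
  then have "{x} \<in> F" unfolding F_def using singleton_strong SV assms(3) by blast
  moreover have "finite F"
  proof -
    have "F \<subseteq> Pow S" unfolding F_def by blast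
    then show ?thesis using fS finite_subset by blast
  qed
  ultimately obtain m where m: "m \<in> F" "\<forall>b\<in>F. m \<le> b \<longrightarrow> m = b"
    using finite_has_maximal by blast
  have "m \<in> Pmax V col S"
    unfolding Pmax_def
  proof (intro CollectI conjI allI impI)
    show "strong_module V col m" "m \<subset> S" using m unfolding F_def by blast+
    fix M'' assume "strong_module V col M'' \<and> M'' \<subset> S"
    then show "\<not> m \<subset> M''" using m unfolding F_def by blast
  qed
  then show ?thesis using m unfolding F_def by blast
qed

lemma qc_eq:
  assumes "A \<in> Pmax V col S" "B \<in> Pmax V col S" "A \<noteq> B" "x \<in> A" "y \<in> B"
  shows "col x y = quotient_color col A B"
proof -
  have A: "(SOME x. x \<in> A) \<in> A" and B: "(SOME y. y \<in> B) \<in> B"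
    using assms by (auto intro: someI)
  have "is_module V col A" "is_module V col B" using assms Pmax_strong unfolding strong_module_def by blast+
  then show ?thesis unfolding quotient_color_def
    using cross[OF _ _ Pmax_disj[OF assms(1-3)] assms(4) A assms(5) B] by blast
qed

end


context cg begin

lemma quot_real:
  assumes S: "strong_module V col S" "2 \<le> card S"
  shows "\<exists>Lq Pq. realizes (quotient_color col) (Pmax V col S) Lq Pq"
proof -
  define C where "C = Pmax V col S"
  define qc where "qc = quotient_color col"
  have SV: "S \<subseteq> V" using S strong_sub by blast
  have fS: "finite S" using SV fin finite_subset by blast
  have CS: "A \<subset> S" "strong_module V col A" if "A \<in> C" for A using that Pmax_strong unfolding C_def by blast+
  have Cne: "A \<noteq> {}" if "A \<in> C" for A using CS(2)[OF that] strong_sub by blast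
  have fC: "finite C"
  proof -
    have "C \<subseteq> Pow S" using CS by blast
    then show ?thesis using fS finite_subset by blast
  qed
  define rep where "rep A = (SOME x. x \<in> A)" for A :: "'a set"
  have rep: "rep A \<in> A" if "A \<in> C" for A unfolding rep_def using Cne[OF that] by (auto intro: someI)
  have repV: "rep A \<in> V" if "A \<in> C" for A using rep[OF that] CS(1)[OF that] SV by blast
  have disj: "A \<inter> B = {}" if "A \<in> C" "B \<in> C" "A \<noteq> B" for A B
    using Pmax_disj that unfolding C_def by blast
  have repne: "rep A \<noteq> rep B" if "A \<in> C" "B \<in> C" "A \<noteq> B" for A B
    using disj[OF that] rep[OF that(1)] rep[OF that(2)] by (metis IntI empty_iff)
  have injrep: "inj_on rep C"
    by (meson inj_onI repne)
  have qcr: "qc A B = col (rep A) (rep B)" for A B unfolding qc_def quotient_color_def rep_def ..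
  have Q: "quotient_colors V col S = {c. \<exists>A\<in>C. \<exists>B\<in>C. A \<noteq> B \<and> c = qc A B}"
    unfolding quotient_colors_def C_def qc_def ..
  show ?thesis
  proof (cases "\<exists>c0. \<forall>A\<in>C. \<forall>B\<in>C. A \<noteq> B \<longrightarrow> qc A B = c0")
    case True
    then obtain c0 where c0': "\<forall>A\<in>C. \<forall>B\<in>C. A \<noteq> B \<longrightarrow> qc A B = c0" by (rule exE)
    have c0: "\<And>A B. A \<in> C \<Longrightarrow> B \<in> C \<Longrightarrow> A \<noteq> B \<Longrightarrow> qc A B = c0"
      using c0' by meson
    obtain f :: "'a set \<Rightarrow> nat" and m :: nat where f: "f ` C = {i. i < m}" "inj_on f C" using finite_imp_inj_to_nat_seg[OF fC] by blast
    have fm: "f A < m" if "A \<in> C" for A using f(1) that by blast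
    define Pq where "Pq i = (if i = c0 then (\<lambda>A. m - f A) else f)" for i
    have "realizes qc C f Pq"
      unfolding realizes_def
    proof (intro conjI allI ballI impI)
      show "inj_on f C" by (rule f(2))
      fix i
      show "inj_on (Pq i) C"
      proof (cases "i = c0")
        case True
        show ?thesis unfolding Pq_def using True
        proof (simp, intro inj_onI)
          fix A B assume "A \<in> C" "B \<in> C" "m - f A = m - f B"
          then have "f A = f B" using fm[of A] fm[of B] by linarith
          then show "A = B" using f(2) \<open>A \<in> C\<close> \<open>B \<in> C\<close> inj_onD by metis
        qed
      next
        case False then show ?thesis unfolding Pq_def using f(2) by simp
      qed
      fix A B assume AB: "A \<in> C" "B \<in> C" "f B < f A"
      then have "A \<noteq> B" by blast
      then have q: "qc A B = c0" using c0 AB by blast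
      show "qc A B = i \<longleftrightarrow> Pq i A < Pq i B"
      proof (cases "i = c0")
        case True
        then show ?thesis unfolding Pq_def using q AB fm[of A] fm[of B] by simp
      next
        case False
        then show ?thesis unfolding Pq_def using q AB by simp
      qed
    qed
    then show ?thesis unfolding C_def qc_def by blast
  next
    case False
    then obtain A1 B1 A2 B2 where ps: "A1 \<in> C" "B1 \<in> C" "A1 \<noteq> B1" "A2 \<in> C" "B2 \<in> C" "A2 \<noteq> B2"
      "qc A1 B1 \<noteq> qc A2 B2" by metis
    define Q where "Q = quotient_colors V col S"
    have Qk: "Q \<subseteq> {1..k}"
    proof
      fix c assume "c \<in> Q"
      then obtain A B where AB: "A \<in> C" "B \<in> C" "A \<noteq> B" "c = qc A B" unfolding Q_def Q by blast
      have "col (rep A) (rep B) \<in> {1..k}" using rng repV[OF AB(1)] repV[OF AB(2)] repne[OF AB(1-3)] by blast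
      then show "c \<in> {1..k}" using AB(4) qcr by simp
    qed
    then have fQ: "finite Q" using finite_subset by blast
    have "qc A1 B1 \<in> Q" "qc A2 B2 \<in> Q" unfolding Q_def Q using ps by blast+
    then have "{qc A1 B1, qc A2 B2} \<subseteq> Q" by blast
    moreover have "card {qc A1 B1, qc A2 B2} = 2" using ps(7) by simp
    ultimately have cQ: "2 \<le> card Q" using card_mono[OF fQ] by metis
    have c3: "3 \<le> card S"
    proof (rule ccontr)
      assume "\<not> 3 \<le> card S"
      then have "card S = 2" using S(2) by linarith
      then obtain x y where xy: "S = {x, y}" "x \<noteq> y" using card_2_iff by metis
      have "Q \<subseteq> {col x y}"
      proof
        fix c assume "c \<in> Q"
        then obtain A B where AB: "A \<in> C" "B \<in> C" "A \<noteq> B" "c = qc A B" unfolding Q_def Q by blast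
        have "rep A \<in> S" "rep B \<in> S" using rep CS AB by blast+
        moreover have "rep A \<noteq> rep B" using repne AB by blast
        ultimately have "(rep A = x \<and> rep B = y) \<or> (rep A = y \<and> rep B = x)" using xy by blast
        moreover have "col y x = col x y" using symI[of y x] xy SV by blast
        ultimately show "c \<in> {col x y}" using AB qcr by auto
      qed
      then have "card Q \<le> 1" using card_mono[of "{col x y}" Q] by simp
      then show False using cQ by linarith
    qed
    have "prime_module V col S" unfolding prime_module_def series_module_def
      using S(1) cQ unfolding Q_def by linarith
    then have "card Q = 2" using h3 S(1) c3 unfolding Q_def by blast
    then obtain a b where ab: "Q = {a, b}" "a \<noteq> b" using card_2_iff by metis
    have qcab: "qc A B = a \<or> qc A B = b" if "A \<in> C" "B \<in> C" "A \<noteq> B" for A B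
    proof -
      have "qc A B \<in> Q" unfolding Q_def Q using that by blast
      then show ?thesis using ab by blast
    qed
    have "a \<in> {1..k}" using Qk ab by blast
    then obtain l \<pi> where spg: "simple_perm_graph V (color_edges col a) l \<pi>" using h2 by blast
    define n where "n = card V"
    have lb: "bij_betw l V {1..n}" and pb: "bij_betw \<pi> {1..n} {1..n}"
      and pc: "\<And>u v. u \<in> V \<Longrightarrow> v \<in> V \<Longrightarrow> l v < l u \<Longrightarrow>
           (color_edges col a u v \<longleftrightarrow> inv_into {1..n} \<pi> (l u) < inv_into {1..n} \<pi> (l v))"
      using spg unfolding simple_perm_graph_def is_labeling_def n_def by blast+
    define p where "p u = inv_into {1..n} \<pi> (l u)" for u
    have injl: "inj_on l V" using lb bij_betw_def by blast
    have lrange: "l u \<in> {1..n}" if "u \<in> V" for u using lb that bij_betwE by blast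
    have "inj_on (inv_into {1..n} \<pi>) {1..n}"
      using pb by (simp add: bij_betw_def inj_on_inv_into)
    then have injp: "inj_on p V" unfolding p_def
      using injl lrange by (simp add: inj_on_def)
    have prange: "p u \<in> {1..n}" if "u \<in> V" for u
      unfolding p_def using lrange[OF that] pb by (metis bij_betw_def inv_into_into)
    define Lq where "Lq A = l (rep A)" for A
    define Pq where "Pq i A = (if i = a then p (rep A) else if i = b then Suc n - p (rep A) else l (rep A))" for i A
    have injLq: "inj_on Lq C" unfolding Lq_def
      using comp_inj_on[OF injrep, of l] injl repV by (simp add: inj_on_def)
    have injpr: "inj_on (\<lambda>A. p (rep A)) C"
      using injp injrep repV by (simp add: inj_on_def)
    have "realizes qc C Lq Pq"
      unfolding realizes_def
    proof (intro conjI allI ballI impI)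
      show "inj_on Lq C" by (rule injLq)
      fix i
      show "inj_on (Pq i) C"
      proof (cases "i = a")
        case True then show ?thesis unfolding Pq_def using injpr by simp
      next
        case na: False
        show ?thesis
        proof (cases "i = b")
          case True
          show ?thesis unfolding Pq_def using na True
          proof (simp, intro inj_onI)
            fix A B assume AB: "A \<in> C" "B \<in> C" "Suc n - p (rep A) = Suc n - p (rep B)"
            then have "p (rep A) = p (rep B)" using prange[OF repV, of A] prange[OF repV, of B] by auto
            then show "A = B" using injpr AB(1,2) inj_onD by metis
          qed
        next
          case False then show ?thesis unfolding Pq_def using na injLq unfolding Lq_def by simp
        qed
      qed
      fix A B assume AB: "A \<in> C" "B \<in> C" "Lq B < Lq A"
      then have ne: "A \<noteq> B" by blast
      have ce: "color_edges col a (rep A) (rep B) \<longleftrightarrow> qc A B = a"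
        unfolding color_edges_def qcr using repne[OF AB(1,2) ne] by simp
      have key: "qc A B = a \<longleftrightarrow> p (rep A) < p (rep B)"
        using pc[OF repV[OF AB(1)] repV[OF AB(2)]] AB(3) ce unfolding Lq_def p_def by simp
      have pne: "p (rep A) \<noteq> p (rep B)" using injpr AB(1,2) ne inj_onD by metis
      have pr: "p (rep A) \<le> n" "p (rep B) \<le> n" using prange[OF repV[OF AB(1)]] prange[OF repV[OF AB(2)]] by auto
      have qab: "qc A B = a \<or> qc A B = b" using qcab AB(1,2) ne by blast
      show "qc A B = i \<longleftrightarrow> Pq i A < Pq i B"
      proof (cases "i = a")
        case True then show ?thesis unfolding Pq_def using key by simp
      next
        case na: False
        show ?thesis
        proof (cases "i = b")
          case True
          have "qc A B = b \<longleftrightarrow> \<not> p (rep A) < p (rep B)" using key qab ab(2) by blast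
          also have "\<dots> \<longleftrightarrow> Suc n - p (rep A) < Suc n - p (rep B)" using pne pr by linarith
          finally show ?thesis unfolding Pq_def using na True by simp
        next
          case False
          then have "qc A B \<noteq> i" using na qab by blast
          then show ?thesis unfolding Pq_def using na False AB(3) unfolding Lq_def by simp
        qed
      qed
    qed
    then show ?thesis unfolding C_def qc_def by blast
  qed
qed

end


context cg begin

lemma main_real:
  assumes "strong_module V col S"
  shows "\<exists>L P. realizes col S L P"
  using assms
proof (induction "card S" arbitrary: S rule: less_induct)
  case less
  have SV: "S \<subseteq> V" "S \<noteq> {}" using less.prems strong_sub by blast+
  have fS: "finite S" using SV fin finite_subset by blast
  show ?case
  proof (cases "card S < 2")
    case True
    then have "card S = 1" proof -
      have "card S \<noteq> 0" using SV fS card_0_eq by blast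
      then show ?thesis using True by linarith
    qed
    then obtain x where x: "S = {x}" using card_1_singletonE by blast
    have "realizes col S (\<lambda>_. 0) (\<lambda>_ _. 0)" unfolding realizes_def x by simp
    then show ?thesis by blast
  next
    case False
    then have c2: "2 \<le> card S" by linarith
    define C where "C = Pmax V col S"
    have CS: "A \<subset> S" "strong_module V col A" if "A \<in> C" for A
      using that Pmax_strong unfolding C_def by blast+
    have "\<forall>A\<in>C. \<exists>LP. realizes col A (fst LP) (snd LP) \<and>
            (\<forall>u\<in>A. fst LP u < card S \<and> (\<forall>i. snd LP i u < card S))"
    proof
      fix A assume A: "A \<in> C"
      have fA: "finite A" using CS(1)[OF A] fS finite_subset by blast
      have lt: "card A < card S" using CS(1)[OF A] fS psubset_card_mono by blast
      obtain L P where r: "realizes col A L P" using less.hyps[OF lt CS(2)[OF A]] by blast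
      have r2: "realizes col A (rank L A) (\<lambda>i. rank (P i) A)" by (rule realizes_rank[OF fA r])
      have "\<forall>u\<in>A. rank L A u < card S \<and> (\<forall>i. rank (P i) A u < card S)"
        using rank_lt[OF fA] lt by (meson less_trans)
      then show "\<exists>LP. realizes col A (fst LP) (snd LP) \<and>
            (\<forall>u\<in>A. fst LP u < card S \<and> (\<forall>i. snd LP i u < card S))"
        using r2 by (intro exI[of _ "(rank L A, \<lambda>i. rank (P i) A)"]) simp
    qed
    from bchoice[OF this] obtain g where g: "\<forall>A\<in>C. realizes col A (fst (g A)) (snd (g A)) \<and>
            (\<forall>u\<in>A. fst (g A) u < card S \<and> (\<forall>i. snd (g A) i u < card S))"
      by (rule exE)
    obtain Lq Pq where q: "realizes (quotient_color col) C Lq Pq"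
      using quot_real[OF less.prems c2] unfolding C_def by blast
    show ?thesis
    proof (rule compose[OF fS _ _ _ _ q, where LL = "\<lambda>A. fst (g A)" and PP = "\<lambda>A. snd (g A)"])
      show "\<forall>A\<in>C. A \<subseteq> S" using CS by blast
      show "\<Union> C = S"
      proof
        show "\<Union> C \<subseteq> S" using CS by blast
        show "S \<subseteq> \<Union> C" using Pmax_cover[OF less.prems c2] unfolding C_def by blast
      qed
      show "\<forall>A\<in>C. \<forall>B\<in>C. A \<noteq> B \<longrightarrow> A \<inter> B = {}" using Pmax_disj unfolding C_def by blast
      show "\<forall>A\<in>C. \<forall>B\<in>C. A \<noteq> B \<longrightarrow> (\<forall>x\<in>A. \<forall>y\<in>B. col x y = quotient_color col A B)"
        using qc_eq unfolding C_def by blast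
      show "\<forall>A\<in>C. realizes col A (fst (g A)) (snd (g A)) \<and>
          (\<forall>u\<in>A. fst (g A) u < card S \<and> (\<forall>i. snd (g A) i u < card S))" by (rule g)
    qed
  qed
qed

lemma final: "V \<noteq> {} \<Longrightarrow> \<exists>l \<pi>. \<forall>i. simple_perm_graph V (color_edges col i) l (\<pi> i)"
proof -
  assume "V \<noteq> {}"
  obtain L0 P0 where r0: "realizes col V L0 P0" using main_real[OF V_strong[OF \<open>V \<noteq> {}\<close>]] by blast
  define L where "L = rank L0 V"
  define P where "P i = rank (P0 i) V" for i
  have r: "realizes col V L P" unfolding L_def P_def using realizes_rank[OF fin r0] by simp
  have iL: "inj_on L V" and iP: "\<And>i. inj_on (P i) V"
    and h: "\<And>i u v. u \<in> V \<Longrightarrow> v \<in> V \<Longrightarrow> L v < L u \<Longrightarrow> (col u v = i \<longleftrightarrow> P i u < P i v)"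
    using r unfolding realizes_def by blast+
  define n where "n = card V"
  have Lb: "L u < n" "P i u < n" if "u \<in> V" for u i unfolding L_def P_def n_def using rank_lt[OF fin that] by auto
  define l where "l u = Suc (L u)" for u
  define q where "q i u = Suc (P i u)" for i u
  have bij1: "bij_betw f V {1..n}" if "inj_on f V" "\<And>u. u \<in> V \<Longrightarrow> f u \<in> {1..n}" for f
    by (rule bij_card[OF fin that(1)]) (use that(2) n_def in auto)
  have lb: "bij_betw l V {1..n}"
    by (rule bij1) (use iL Lb in \<open>auto simp: l_def inj_on_def Suc_le_eq\<close>)
  have qb: "bij_betw (q i) V {1..n}" for i
    by (rule bij1) (use iP Lb in \<open>auto simp: q_def inj_on_def Suc_le_eq\<close>)
  define \<pi> where "\<pi> i j = l (inv_into V (q i) j)" for i j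
  have pb: "bij_betw (\<pi> i) {1..n} {1..n}" for i
  proof -
    have "bij_betw (inv_into V (q i)) {1..n} V" by (rule bij_betw_inv_into[OF qb])
    then have "bij_betw (l \<circ> inv_into V (q i)) {1..n} {1..n}" using lb by (rule bij_betw_trans)
    then show ?thesis unfolding \<pi>_def comp_def .
  qed
  have pinv: "inv_into {1..n} (\<pi> i) (l u) = q i u" if "u \<in> V" for i u
  proof (rule inv_into_f_eq)
    show "inj_on (\<pi> i) {1..n}" using pb bij_betw_def by blast
    show "q i u \<in> {1..n}" using qb that bij_betwE by blast
    show "\<pi> i (q i u) = l u" unfolding \<pi>_def
      using inv_into_f_f[OF bij_betw_imp_inj_on[OF qb] that] by simp
  qed
  have "simple_perm_graph V (color_edges col i) l (\<pi> i)" for i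
    unfolding simple_perm_graph_def is_labeling_def
  proof (intro conjI ballI impI)
    show "bij_betw l V {1..card V}" using lb n_def by simp
    show "bij_betw (\<pi> i) {1..card V} {1..card V}" using pb n_def by simp
    fix u v assume uv: "u \<in> V" "v \<in> V" "l v < l u"
    then have "L v < L u" unfolding l_def by simp
    then have "u \<noteq> v" by blast
    have "color_edges col i u v \<longleftrightarrow> col u v = i" unfolding color_edges_def using \<open>u \<noteq> v\<close> by simp
    also have "\<dots> \<longleftrightarrow> P i u < P i v" using h uv \<open>L v < L u\<close> by blast
    also have "\<dots> \<longleftrightarrow> q i u < q i v" unfolding q_def by simp
    also have "\<dots> \<longleftrightarrow> inv_into {1..card V} (\<pi> i) (l u) < inv_into {1..card V} (\<pi> i) (l v)"
      using pinv uv n_def by simp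
    finally show "color_edges col i u v \<longleftrightarrow> inv_into {1..card V} (\<pi> i) (l u) < inv_into {1..card V} (\<pi> i) (l v)" .
  qed
  then show ?thesis by blast
qed

end

theorem lemma4p12:
  fixes V :: "'a set" and k :: nat and col :: "'a \<Rightarrow> 'a \<Rightarrow> nat"
  assumes "complete_k_edge_colored V k col"
    and "\<forall>i\<in>{1..k}. \<exists>l \<pi>. simple_perm_graph V (color_edges col i) l \<pi>"
    and "\<forall>M. strong_module V col M \<and> prime_module V col M \<and> card M \<ge> 3
               \<longrightarrow> card (quotient_colors V col M) = 2"
  shows "complete_edge_colored_perm_graph V k col"
proof -
  have "cg V k col" unfolding cg_def using assms unfolding complete_k_edge_colored_def by blast
  moreover have "V \<noteq> {}" using assms(1) unfolding complete_k_edge_colored_def by blast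
  ultimately obtain l \<pi> where "\<forall>i. simple_perm_graph V (color_edges col i) l (\<pi> i)"
    using cg.final by blast
  then show ?thesis unfolding complete_edge_colored_perm_graph_def by blast
qed

end
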